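(* Let $g,h\in\mathbb{F}_q[t]$ with $g\neq 0$, and assume that $\gcd(g,h)$ is either $1$ or square-free. Then there are infinitely many monic Carmichael polynomials $f\in\mathbb{F}_q[t]$ with $f\equiv h\pmod g$.
   Context: $\mathbb{F}_q$ is the finite field with $q$ elements. A finite ring $S$ is a Carmichael ring if $S$ is not a field and $a^{|S|}=a$ for every $a\in S$. A polynomial $f\in\mathbb{F}_q[t]$ is a Carmichael polynomial if $\mathbb{F}_q[t]/(f)$ is a Carmichael ring. *)

theory Defs
  imports "HOL-Algebra.Algebraic_Closure_Type" "HOL-Computational_Algebra.Computational_Algebra"
begin

definition carmichael_ring :: "('b, 'c) ring_scheme \<Rightarrow> bool" where
  "carmichael_ring S \<longleftrightarrow> finite (carrier S) \<and> \<not> field S \<and>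
     (\<forall>a \<in> carrier S. a [^]\<^bsub>S\<^esub> card (carrier S) = a)"

abbreviation poly_ring_of :: "'a::field poly ring" where
  "poly_ring_of \<equiv> ring_of_type_algebra"

definition carmichael_poly :: "'a::field poly \<Rightarrow> bool" where
  "carmichael_poly f \<longleftrightarrow>
     carmichael_ring (poly_ring_of Quot (PIdl\<^bsub>poly_ring_of\<^esub> f))"

end

theory Submission
  imports Defs "HOL-Library.Cardinality"
begin

lemma ff_pow_card:
  fixes x :: "'a::{finite,field}"
  shows "x ^ CARD('a) = x"
proof (cases "x = 0")
  case False
  have "x * (\<Prod>y\<in>UNIV-{0}. x * y) = x * x ^ (card (UNIV :: 'a set) - 1) * \<Prod>(UNIV-{0})"
    by (simp add: prod.distrib mult_ac)
  also have "x * x ^ (card (UNIV :: 'a set) - 1) = x ^ Suc (card (UNIV :: 'a set) - 1)"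
    by (subst power_Suc) auto
  also have "Suc (card (UNIV :: 'a set) - 1) = card (UNIV :: 'a set)"
    using finite_UNIV_card_ge_0[where ?'a = 'a] by simp
  also have "(\<Prod>y\<in>UNIV-{0}. x * y) = (\<Prod>y\<in>UNIV-{0}. y)"
    by (rule prod.reindex_bij_witness[of _ "\<lambda>y. y / x" "\<lambda>y. x * y"]) (use False in auto)
  finally show ?thesis
    by simp
qed (use finite_UNIV_card_ge_0[where ?'a = 'a] in auto)

lemma ff_card_ge2: "CARD('a::{finite,field}) \<ge> 2"
proof -
  have "{0::'a, 1} \<subseteq> UNIV" by auto
  hence "card {0::'a,1} \<le> CARD('a)" by (intro card_mono) auto
  thus ?thesis by simp
qed

lemma Xpow_monom: "([:0,1:] :: 'a::comm_ring_1 poly) ^ n = monom 1 n"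
  by (simp add: monom_altdef)

lemma const_pow: "([:c:] :: 'a::comm_ring_1 poly) ^ n = [:c ^ n:]"
  by (induction n) (auto simp: mult.commute)

lemma ff_X1_pow:
  "([:1,1:] :: 'a::{finite,field} poly) ^ CARD('a) = [:0,1:] ^ CARD('a) + 1"
proof (rule ccontr)
  let ?q = "CARD('a)"
  define D :: "'a poly" where "D = [:1,1:] ^ ?q - [:0,1:] ^ ?q - 1"
  assume ne: "[:1,1:] ^ ?q \<noteq> [:0,1:] ^ ?q + (1 :: 'a poly)"
  hence D0: "D \<noteq> 0" unfolding D_def by (simp add: algebra_simps)
  have q2: "?q \<ge> 2" by (rule ff_card_ge2)
  have cX: "coeff ([:0,1:] ^ ?q :: 'a poly) k = (if k = ?q then 1 else 0)" for k
    by (simp add: Xpow_monom coeff_monom)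
  have "degree D < ?q"
  proof (rule degree_lessI)
    show "D \<noteq> 0 \<or> 0 < ?q" using q2 by auto
    show "\<forall>k\<ge>?q. coeff D k = 0"
    proof (intro allI impI)
      fix k assume k: "k \<ge> ?q"
      show "coeff D k = 0"
      proof (cases "k = ?q")
        case True
        then show ?thesis using q2 unfolding D_def by (simp add: coeff_linear_power cX)
      next
        case False
        hence "k > ?q" using k by auto
        moreover have "degree ([:1,1:] ^ ?q :: 'a poly) = ?q"
          by (simp add: degree_power_eq)
        ultimately have "coeff ([:1,1:] ^ ?q :: 'a poly) k = 0"
          by (simp add: coeff_eq_0)
        thus ?thesis using False \<open>k > ?q\<close> unfolding D_def by (simp add: cX)
      qed
    qed
  qed
  moreover have "{x. poly D x = 0} = UNIV"
    unfolding D_def by (auto simp: ff_pow_card)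
  hence "card {x. poly D x = 0} = ?q" by simp
  ultimately show False using card_poly_roots_bound[OF D0] by simp
qed

lemma ff_binom_zero:
  assumes "0 < k" "k < CARD('a::{finite,field})"
  shows "(of_nat (CARD('a) choose k) :: 'a) = 0"
proof -
  have "coeff ([:1,1:] ^ CARD('a) :: 'a poly) k = of_nat (CARD('a) choose k)"
    using assms by (subst coeff_linear_poly_power) auto
  moreover have "coeff ([:0,1:] ^ CARD('a) + 1 :: 'a poly) k = 0"
    using assms by (simp add: Xpow_monom coeff_monom)
  ultimately show ?thesis using ff_X1_pow by metis
qed

lemma ff_char_card: "(of_nat CARD('a::{finite,field}) :: 'a) = 0"
  using ff_binom_zero[of 1, where 'a='a] ff_card_ge2[where 'a='a] by simp

lemma ff_char_card_poly: "(of_nat CARD('a::{finite,field}) :: 'a poly) = 0"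
  by (simp add: of_nat_poly ff_char_card)

lemma frob_add:
  fixes x y :: "'a::{finite,field} poly"
  shows "(x + y) ^ CARD('a) = x ^ CARD('a) + y ^ CARD('a)"
proof -
  let ?q = "CARD('a)"
  have q2: "?q \<ge> 2" by (rule ff_card_ge2)
  have "(x + y) ^ ?q = (\<Sum>k\<le>?q. of_nat (?q choose k) * x ^ k * y ^ (?q - k))"
    by (rule binomial_ring)
  also have "\<dots> = (\<Sum>k\<in>{0,?q}. of_nat (?q choose k) * x ^ k * y ^ (?q - k))"
  proof (intro sum.mono_neutral_right ballI)
    fix k assume "k \<in> {..?q} - {0, ?q}"
    hence "0 < k" "k < ?q" by auto
    hence "(of_nat (?q choose k) :: 'a poly) = 0"
      by (simp add: of_nat_poly ff_binom_zero)
    thus "of_nat (?q choose k) * x ^ k * y ^ (?q - k) = 0" by simp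
  qed auto
  also have "\<dots> = x ^ ?q + y ^ ?q" using q2 by (simp add: add_ac)
  finally show ?thesis .
qed

lemma frob_pow_add:
  fixes x y :: "'a::{finite,field} poly"
  shows "(x + y) ^ (CARD('a) ^ k) = x ^ (CARD('a) ^ k) + y ^ (CARD('a) ^ k)"
proof (induction k)
  case (Suc k)
  have "(x + y) ^ (CARD('a) ^ Suc k) = ((x + y) ^ (CARD('a) ^ k)) ^ CARD('a)"
    by (simp add: power_mult[symmetric] mult.commute)
  also have "\<dots> = (x ^ (CARD('a) ^ k)) ^ CARD('a) + (y ^ (CARD('a) ^ k)) ^ CARD('a)"
    by (simp add: Suc frob_add)
  also have "\<dots> = x ^ (CARD('a) ^ Suc k) + y ^ (CARD('a) ^ Suc k)"
    by (simp add: power_mult[symmetric] mult.commute)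
  finally show ?case .
qed simp

lemma frob_pow_diff:
  fixes x y :: "'a::{finite,field} poly"
  shows "(x - y) ^ (CARD('a) ^ k) = x ^ (CARD('a) ^ k) - y ^ (CARD('a) ^ k)"
  using frob_pow_add[of "x - y" y k] by (simp add: algebra_simps)

lemma frob_pow_sum:
  fixes f :: "'b \<Rightarrow> 'a::{finite,field} poly"
  shows "(sum f A) ^ (CARD('a) ^ k) = (\<Sum>i\<in>A. f i ^ (CARD('a) ^ k))"
  by (induction A rule: infinite_finite_induct) (auto simp: frob_pow_add)

lemma ff_pow_card_pow:
  fixes c :: "'a::{finite,field}"
  shows "c ^ (CARD('a) ^ k) = c"
proof (induction k)
  case (Suc k)
  have "c ^ (CARD('a) ^ Suc k) = (c ^ (CARD('a) ^ k)) ^ CARD('a)"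
    by (simp add: power_mult[symmetric] mult.commute)
  then show ?case by (simp add: Suc ff_pow_card)
qed simp

lemma frob_pow_const:
  "([:c:] :: 'a::{finite,field} poly) ^ (CARD('a) ^ k) = [:c:]"
  by (simp add: const_pow ff_pow_card_pow)

lemma frob_pcompose:
  fixes a :: "'a::{finite,field} poly"
  shows "a ^ (CARD('a) ^ k) = a \<circ>\<^sub>p ([:0,1:] ^ (CARD('a) ^ k))"
proof (induction a)
  case 0
  then show ?case by (simp add: power_0_left)
next
  case (pCons c p)
  have eq: "pCons c p = [:c:] + [:0,1:] * p" by simp
  have "pCons c p ^ (CARD('a) ^ k) = ([:c:] + [:0,1:] * p) ^ (CARD('a) ^ k)"
    by (subst eq) (rule refl)
  also have "\<dots> = [:c:] ^ (CARD('a) ^ k) + ([:0,1:] * p) ^ (CARD('a) ^ k)"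
    by (rule frob_pow_add)
  also have "\<dots> = [:c:] + [:0,1:] ^ (CARD('a) ^ k) * (p \<circ>\<^sub>p ([:0,1:] ^ (CARD('a) ^ k)))"
    by (simp only: frob_pow_const power_mult_distrib pCons.IH)
  finally show ?case by (simp add: pcompose_pCons)
qed


lemma R_simps:
  "carrier (poly_ring_of :: 'a::field poly ring) = UNIV"
  "x \<otimes>\<^bsub>(poly_ring_of :: 'a::field poly ring)\<^esub> y = x * y"
  "x \<oplus>\<^bsub>(poly_ring_of :: 'a::field poly ring)\<^esub> y = x + y"
  "\<zero>\<^bsub>(poly_ring_of :: 'a::field poly ring)\<^esub> = 0"
  "\<one>\<^bsub>(poly_ring_of :: 'a::field poly ring)\<^esub> = 1"
  by (simp_all add: ring_of_type_algebra_def)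

lemma R_cring: "cring (poly_ring_of :: 'a::field poly ring)"
  by (rule cring_from_type_algebra)

lemma PIdl_eq: "PIdl\<^bsub>(poly_ring_of :: 'a::field poly ring)\<^esub> f = {x. f dvd x}"
  by (auto simp: cgenideal_def R_simps dvd_def mult.commute)

lemma PIdl_ideal: "ideal (PIdl\<^bsub>(poly_ring_of :: 'a::field poly ring)\<^esub> f) poly_ring_of"
  using cring.cgenideal_ideal[OF R_cring] by (simp add: R_simps)

lemma coset_eq:
  "(PIdl\<^bsub>(poly_ring_of :: 'a::field poly ring)\<^esub> f) +>\<^bsub>(poly_ring_of :: 'a::field poly ring)\<^esub> a
     = {x. f dvd x - a}"
proof -
  have "(PIdl\<^bsub>(poly_ring_of :: 'a::field poly ring)\<^esub> f) +>\<^bsub>(poly_ring_of :: 'a::field poly ring)\<^esub> a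
      = (\<Union>h\<in>{x. f dvd x}. {h + a})"
    by (simp add: a_r_coset_def' PIdl_eq R_simps)
  also have "\<dots> = {x. f dvd x - a}"
  proof (safe, goal_cases)
    case (1 x h) then show ?case by simp
  next
    case (2 x) then show ?case by (intro UN_I[of "x - a"]) auto
  qed
  finally show ?thesis .
qed

definition Sdeg :: "nat \<Rightarrow> 'a::zero poly set" where
  "Sdeg n = {p. \<forall>i\<ge>n. coeff p i = 0}"

lemma Sdeg_Suc: "Sdeg (Suc n) = (\<lambda>(a, p). pCons a p) ` (UNIV \<times> Sdeg n)"
proof (safe, goal_cases)
  case (1 x)
  obtain a p where x: "x = pCons a p" by (cases x) auto
  have "p \<in> Sdeg n"
    using 1 unfolding x Sdeg_def by (auto simp: coeff_pCons)
  then show ?case using x by auto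
next
  case (2 x a p)
  then show ?case by (auto simp: Sdeg_def coeff_pCons split: nat.splits)
qed

lemma Sdeg_0: "Sdeg 0 = {0}"
  by (auto simp: Sdeg_def poly_eq_iff)

lemma card_Sdeg: "card (Sdeg n :: 'a::{finite,zero} poly set) = CARD('a) ^ n"
proof (induction n)
  case 0
  then show ?case by (simp add: Sdeg_0)
next
  case (Suc n)
  have inj: "inj_on (\<lambda>(a, p). pCons a (p::'a poly)) (UNIV \<times> Sdeg n)"
    by (auto simp: inj_on_def)
  have fin: "finite (Sdeg n :: 'a poly set)"
    using Suc card_gt_0_iff[of "Sdeg n :: 'a poly set"] finite_UNIV_card_ge_0[where 'a='a] by auto
  show ?case
    unfolding Sdeg_Suc card_image[OF inj]
    by (simp add: card_cartesian_product Suc)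
qed

lemma finite_Sdeg: "finite (Sdeg n :: 'a::{finite,zero} poly set)"
  using card_Sdeg[where 'a='a, of n] card_gt_0_iff[of "Sdeg n :: 'a poly set"]
    finite_UNIV_card_ge_0[where 'a='a] by auto

lemma Sdeg_degree: "n > 0 \<Longrightarrow> Sdeg n = {p. degree p < n}"
  by (auto simp: Sdeg_def coeff_eq_0 intro!: degree_lessI)

lemma finite_deg_less: "finite {p :: 'a::{finite,zero} poly. degree p < n}"
proof (cases "n = 0")
  case True then show ?thesis by simp
next
  case False then show ?thesis using finite_Sdeg[where 'a='a, of n] Sdeg_degree[where 'a='a, of n] by simp
qed

lemma card_deg_less: "n > 0 \<Longrightarrow> card {p :: 'a::{finite,zero} poly. degree p < n} = CARD('a) ^ n"
  using card_Sdeg[where 'a='a, of n] Sdeg_degree[where 'a='a, of n] by simp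

lemma dvd_pcompose_cong:
  fixes m :: "'a::comm_ring_1 poly"
  assumes "m dvd a - b"
  shows "m dvd (p \<circ>\<^sub>p a) - (p \<circ>\<^sub>p b)"
proof (induction p)
  case 0 then show ?case by simp
next
  case (pCons c p)
  have "(pCons c p \<circ>\<^sub>p a) - (pCons c p \<circ>\<^sub>p b) = a * ((p \<circ>\<^sub>p a) - (p \<circ>\<^sub>p b)) + (a - b) * (p \<circ>\<^sub>p b)"
    by (simp add: pcompose_pCons algebra_simps)
  then show ?case using pCons assms by (simp add: dvd_add dvd_mult dvd_mult2)
qed

theorem carmichael_crit:
  fixes f A B :: "'a::{finite,field} poly"
  assumes deg: "degree f = n" and n0: "n > 0"
    and dv: "f dvd [:0,1:] ^ (CARD('a) ^ n) - [:0,1:]"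
    and fAB: "f = A * B" and A0: "degree A > 0" and B0: "degree B > 0"
  shows "carmichael_poly f"
proof -
  let ?R = "poly_ring_of :: 'a poly ring"
  let ?I = "PIdl\<^bsub>?R\<^esub> f"
  let ?S = "?R Quot ?I"
  let ?c = "\<lambda>a. ?I +>\<^bsub>?R\<^esub> a"
  have Iid: "ideal ?I ?R" by (rule PIdl_ideal)
  have f0: "f \<noteq> 0" using deg n0 by auto
  have c_eq: "?c a = ?c b \<longleftrightarrow> f dvd a - b" for a b
  proof
    assume "?c a = ?c b"
    hence "a \<in> {x. f dvd x - b}" using coset_eq[of f a] coset_eq[of f b] by auto
    thus "f dvd a - b" by simp
  next
    assume "f dvd a - b"
    have "f dvd x - a \<longleftrightarrow> f dvd x - b" for x
    proof -
      have "x - b = (x - a) + (a - b)" by simp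
      thus ?thesis using \<open>f dvd a - b\<close> by (metis dvd_add_left_iff)
    qed
    hence "{x. f dvd x - a} = {x. f dvd x - b}" by blast
    thus "?c a = ?c b" using coset_eq[of f a] coset_eq[of f b] by simp
  qed
  have carr: "carrier ?S = ?c ` UNIV"
  proof -
    have "carrier ?S = a_rcosets\<^bsub>?R\<^esub> ?I" by (simp add: FactRing_def)
    also have "\<dots> = (\<Union>a\<in>carrier ?R. {?c a})" by (simp only: A_RCOSETS_def')
    also have "\<dots> = (\<Union>a\<in>UNIV. {?c a})" by (simp only: R_simps(1))
    also have "\<dots> = ?c ` UNIV" by (rule UNION_singleton_eq_range)
    finally show ?thesis .
  qed
  have carr2: "carrier ?S = ?c ` {p. degree p < n}"
  proof -
    have "?c a \<in> ?c ` {p. degree p < n}" for a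
    proof -
      have "degree (a mod f) < n"
      proof (cases "a mod f = 0")
        case True then show ?thesis using n0 by simp
      next
        case False then show ?thesis using degree_mod_less'[OF f0 False] deg by simp
      qed
      moreover have "?c a = ?c (a mod f)" unfolding c_eq
        by (simp add: minus_mod_eq_mult_div)
      ultimately show ?thesis by blast
    qed
    thus ?thesis unfolding carr by blast
  qed
  have inj: "inj_on ?c {p. degree p < n}"
  proof (rule inj_onI)
    fix a b assume a: "a \<in> {p. degree p < n}" and b: "b \<in> {p. degree p < n}" and e: "?c a = ?c b"
    have "f dvd a - b" using e c_eq by blast
    moreover have "degree (a - b) < degree f" using a b deg
      by (simp add: degree_diff_less)
    ultimately have "a - b = 0"
      using dvd_imp_degree_le[of f "a - b"] by (cases "a - b = 0") auto
    thus "a = b" by simp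
  qed
  have card: "card (carrier ?S) = CARD('a) ^ n"
    using card_image[OF inj] carr2 card_deg_less[OF n0, where 'a='a] by simp
  have fin: "finite (carrier ?S)"
    unfolding carr2 by (rule finite_imageI) (rule finite_deg_less)
  have hom: "ring_hom_cring ?R ?S ?c"
    by (rule ideal.rcos_ring_hom_cring[OF Iid R_cring])
  have powR: "a [^]\<^bsub>?R\<^esub> (k::nat) = a ^ k" for a k
    by (induction k) (simp_all add: R_simps mult.commute)
  have zeroS: "\<zero>\<^bsub>?S\<^esub> = ?c 0"
    unfolding coset_eq by (simp add: FactRing_def PIdl_eq)
  have pw: "x [^]\<^bsub>?S\<^esub> card (carrier ?S) = x" if x: "x \<in> carrier ?S" for x
  proof -
    obtain a where xa: "x = ?c a" using x carr by blast
    have hp: "?c (a [^]\<^bsub>?R\<^esub> (CARD('a) ^ n)) = ?c a [^]\<^bsub>?S\<^esub> (CARD('a) ^ n)"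
      by (rule ring_hom_cring.hom_pow[OF hom]) (simp add: R_simps)
    have "?c (a ^ (CARD('a) ^ n)) = ?c a"
      unfolding c_eq frob_pcompose[of a n]
      using dvd_pcompose_cong[OF dv, of a] by simp
    thus ?thesis using hp unfolding xa card powR by simp
  qed
  have nf: "\<not> field ?S"
  proof
    assume "field ?S"
    hence dom: "domain ?S" by (rule field.axioms(1))
    have "?c A \<otimes>\<^bsub>?S\<^esub> ?c B = ?c (A \<otimes>\<^bsub>?R\<^esub> B)"
      by (rule ring_hom_mult[OF ideal.rcos_ring_hom[OF Iid], symmetric]) (simp_all add: R_simps)
    also have "\<dots> = ?c 0" unfolding R_simps c_eq using fAB by simp
    also have "\<dots> = \<zero>\<^bsub>?S\<^esub>" by (rule zeroS[symmetric])
    finally have "?c A = \<zero>\<^bsub>?S\<^esub> \<or> ?c B = \<zero>\<^bsub>?S\<^esub>"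
      using domain.integral[OF dom] carr by blast
    moreover have "\<not> f dvd A" "\<not> f dvd B"
    proof -
      have dA: "degree f = degree A + degree B" using fAB f0 by (simp add: degree_mult_eq)
      have "A \<noteq> 0" "B \<noteq> 0" using A0 B0 by auto
      thus "\<not> f dvd A" "\<not> f dvd B"
        using dvd_imp_degree_le[of f A] dvd_imp_degree_le[of f B] dA A0 B0 by auto
    qed
    ultimately show False unfolding zeroS c_eq by simp
  qed
  show ?thesis
    unfolding carmichael_poly_def carmichael_ring_def
    using fin nf pw by blast
qed


lemma pow_cong_dvd:
  fixes m x y :: "'a::comm_ring_1"
  assumes "m dvd x - y"
  shows "m dvd x ^ n - y ^ n"
proof (induction n)
  case (Suc n)
  have "x ^ Suc n - y ^ Suc n = x * (x ^ n - y ^ n) + (x - y) * y ^ n"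
    by (simp add: algebra_simps)
  then show ?case using Suc assms by (simp add: dvd_add dvd_mult dvd_mult2)
qed simp

lemma avoid_classes:
  fixes S :: "'a::{field_gcd} poly set"
  assumes "finite S" "\<forall>\<pi>\<in>S. prime \<pi>"
    and cls: "\<forall>\<pi>\<in>S. \<forall>a b. B \<pi> a \<longrightarrow> \<pi> dvd b - a \<longrightarrow> B \<pi> b"
    and uniq: "\<forall>\<pi>\<in>S. \<forall>a b. B \<pi> a \<longrightarrow> B \<pi> b \<longrightarrow> \<pi> dvd a - b"
  shows "\<exists>w. \<forall>\<pi>\<in>S. \<not> B \<pi> w"
  using assms
proof (induction S rule: finite_induct)
  case empty then show ?case by simp
next
  case (insert p S)
  have h1: "\<forall>\<pi>\<in>S. prime \<pi>" using insert.prems(1) by simp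
  have h2: "\<forall>\<pi>\<in>S. \<forall>a b. B \<pi> a \<longrightarrow> \<pi> dvd b - a \<longrightarrow> B \<pi> b" using insert.prems(2) by simp
  have h3: "\<forall>\<pi>\<in>S. \<forall>a b. B \<pi> a \<longrightarrow> B \<pi> b \<longrightarrow> \<pi> dvd a - b" using insert.prems(3) by simp
  obtain w where w: "\<forall>\<pi>\<in>S. \<not> B \<pi> w" using insert.IH[OF h1 h2 h3] by blast
  show ?case
  proof (cases "B p w")
    case False then show ?thesis using w by (intro exI[of _ w]) auto
  next
    case True
    let ?M = "\<Prod>S"
    have "\<forall>\<pi>\<in>S. \<not> B \<pi> (w + ?M)"
    proof (intro ballI notI)
      fix \<sigma> assume s: "\<sigma> \<in> S" and b: "B \<sigma> (w + ?M)"
      have "\<sigma> dvd ?M" by (simp add: prod.remove[OF insert.hyps(1) s])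
      hence d: "\<sigma> dvd w - (w + ?M)" by simp
      have "B \<sigma> w" using insert.prems(2)[rule_format, of \<sigma> "w + ?M" w] s b d by simp
      thus False using w s by blast
    qed
    moreover have "\<not> B p (w + ?M)"
    proof
      assume "B p (w + ?M)"
      hence "p dvd w - (w + ?M)" using insert.prems(3)[rule_format, of p w "w + ?M"] True by simp
      hence "p dvd ?M" by (simp add: dvd_minus_iff)
      then obtain s where "s \<in> S" "p dvd s"
        using prime_dvd_prod_iff[OF insert.hyps(1), of p id] insert.prems(1) by auto
      hence "p = s" using insert.prems(1) by (intro primes_dvd_imp_eq) auto
      thus False using \<open>s \<in> S\<close> insert.hyps(2) by simp
    qed
    ultimately show ?thesis by (intro exI[of _ "w + ?M"]) auto
  qed
qed

definition D1 :: "'a::idom poly \<Rightarrow> 'a poly" where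
  "D1 Y = Y - [:0,1:] * pderiv Y"

lemma D1_add: "D1 (Y + Z) = D1 Y + D1 Z"
  by (simp add: D1_def pderiv_add algebra_simps)

lemma D1_X: "D1 ([:0,1:] * Z) = - ([:0,1:] * ([:0,1:] * pderiv Z))"
  by (simp add: D1_def pderiv_mult pderiv_pCons algebra_simps)

lemma pderiv_pow_card:
  fixes y :: "'a::{finite,field} poly"
  shows "pderiv (y ^ CARD('a)) = 0"
  by (simp add: pderiv_power ff_char_card)

lemma sq_dvd_pderiv:
  fixes P \<pi> :: "'a::idom poly"
  assumes "\<pi> ^ 2 dvd P"
  shows "\<pi> dvd pderiv P"
proof -
  from assms obtain Q where "P = \<pi> ^ 2 * Q" by (elim dvdE)
  hence "P = \<pi> * (\<pi> * Q)" by (simp add: power2_eq_square mult.assoc)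
  thus ?thesis by (simp add: pderiv_mult dvd_add)
qed


lemma avoid_ext:
  fixes S :: "'a::{field_gcd} poly set"
  assumes "finite S"
    and cls: "\<forall>\<pi>\<in>S. \<forall>a b. B \<pi> a \<longrightarrow> \<pi> dvd b - a \<longrightarrow> B \<pi> b"
    and w: "\<forall>\<pi>\<in>S. \<not> B \<pi> w"
  shows "\<forall>\<pi>\<in>S. \<not> B \<pi> (w + \<Prod>S * s)"
proof (intro ballI notI)
  fix \<pi> assume p: "\<pi> \<in> S" and b: "B \<pi> (w + \<Prod>S * s)"
  have "\<pi> dvd \<Prod>S" by (simp add: prod.remove[OF assms(1) p])
  hence d: "\<pi> dvd w - (w + \<Prod>S * s)" by simp
  have "B \<pi> w" using cls[rule_format, of \<pi> "w + \<Prod>S * s" w] p b d by simp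
  thus False using w p by blast
qed

lemma prod_primes_nz:
  fixes S :: "'a::{field_gcd} poly set"
  assumes "finite S" "\<forall>\<pi>\<in>S. prime \<pi>"
  shows "\<Prod>S \<noteq> 0"
  using assms by (simp add: prod_zero_iff) (metis not_prime_0)

lemma step1:
  fixes g h :: "'a::{finite,field_gcd} poly"
  assumes g0: "g \<noteq> 0" and sq: "squarefree (gcd g h)"
  shows "\<exists>c0. (\<forall>\<pi>. prime \<pi> \<longrightarrow> \<pi> dvd g \<longrightarrow> \<not> \<pi>^2 dvd h + g * c0) \<and> D1 (h + g * c0) \<noteq> 0"
proof -
  let ?S = "prime_factors g"
  let ?B = "\<lambda>\<pi> c. \<pi>^2 dvd h + g * c"
  have fin: "finite ?S" by simp
  have pr: "\<forall>\<pi>\<in>?S. prime \<pi>" by (auto simp: in_prime_factors_iff)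
  have cls: "\<forall>\<pi>\<in>?S. \<forall>a b. ?B \<pi> a \<longrightarrow> \<pi> dvd b - a \<longrightarrow> ?B \<pi> b"
  proof (intro ballI allI impI)
    fix \<pi> a b assume p: "\<pi> \<in> ?S" and ba: "?B \<pi> a" and d: "\<pi> dvd b - a"
    have "\<pi> dvd g" using p by (simp add: in_prime_factors_iff)
    hence "\<pi> * \<pi> dvd g * (b - a)" using d by (rule mult_dvd_mono)
    hence "\<pi>^2 dvd g * (b - a)" by (simp add: power2_eq_square)
    moreover have "h + g * b = (h + g * a) + g * (b - a)" by (simp add: algebra_simps)
    ultimately show "?B \<pi> b" using ba by (metis dvd_add)
  qed
  have uniq: "\<forall>\<pi>\<in>?S. \<forall>a b. ?B \<pi> a \<longrightarrow> ?B \<pi> b \<longrightarrow> \<pi> dvd a - b"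
  proof (intro ballI allI impI)
    fix \<pi> a b assume p: "\<pi> \<in> ?S" and ba: "?B \<pi> a" and bb: "?B \<pi> b"
    have pp: "prime \<pi>" and pg: "\<pi> dvd g" using p by (auto simp: in_prime_factors_iff)
    have nsq: "\<not> \<pi>^2 dvd g"
    proof
      assume a2: "\<pi>^2 dvd g"
      hence "\<pi>^2 dvd g * a" by simp
      hence "\<pi>^2 dvd h" using ba by (metis dvd_add_right_iff add.commute)
      hence "\<pi>^2 dvd gcd g h" using a2 by simp
      hence "\<pi> dvd 1" using sq by (rule squarefreeD[rotated])
      thus False using pp by (simp add: prime_def prime_elem_def)
    qed
    obtain u where gu: "g = \<pi> * u" using pg by (elim dvdE)
    have nu: "\<not> \<pi> dvd u"
    proof
      assume "\<pi> dvd u"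
      hence "\<pi> * \<pi> dvd \<pi> * u" by simp
      thus False using nsq gu by (simp add: power2_eq_square)
    qed
    have "g * a - g * b = (h + g * a) - (h + g * b)" by simp
    hence "\<pi>^2 dvd g * (a - b)" using ba bb by (metis dvd_diff right_diff_distrib)
    hence "\<pi> * \<pi> dvd \<pi> * (u * (a - b))" by (simp add: gu power2_eq_square mult.assoc)
    hence "\<pi> dvd u * (a - b)" using pp by (simp add: dvd_mult_cancel_left)
    thus "\<pi> dvd a - b" using nu pp by (simp add: prime_dvd_mult_iff)
  qed
  obtain w1 where w1: "\<forall>\<pi>\<in>?S. \<not> ?B \<pi> w1" using avoid_classes[OF fin pr cls uniq] by blast
  have ext: "\<forall>\<pi>\<in>?S. \<not> ?B \<pi> (w1 + \<Prod>?S * s)" for s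
    by (rule avoid_ext[OF fin cls w1])
  have good: "\<forall>\<pi>. prime \<pi> \<longrightarrow> \<pi> dvd g \<longrightarrow> \<not> \<pi>^2 dvd h + g * (w1 + \<Prod>?S * s)" for s
    using ext[of s] g0 by (auto simp: in_prime_factors_iff)
  let ?Z = "g * \<Prod>?S"
  have Z0: "?Z \<noteq> 0" using g0 prod_primes_nz[OF fin pr] by simp
  let ?H0 = "h + g * w1"
  have hs: "h + g * (w1 + \<Prod>?S * s) = ?H0 + ?Z * s" for s by (simp add: algebra_simps)
  show ?thesis
  proof (cases "D1 ?H0 = 0")
    case False
    then show ?thesis using good[of 0] by (intro exI[of _ "w1 + \<Prod>?S * 0"]) simp
  next
    case True
    show ?thesis
    proof (cases "D1 (?H0 + ?Z) = 0")
      case False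
      then show ?thesis using good[of 1] hs[of 1] by (intro exI[of _ "w1 + \<Prod>?S * 1"]) (simp add: add.assoc)
    next
      case False2: True
      have DZ: "D1 ?Z = 0" using True False2 by (simp add: D1_add)
      hence Zeq: "?Z = [:0,1:] * pderiv ?Z" unfolding D1_def by simp
      have "D1 (?H0 + ?Z * [:0,1:]) = D1 ?H0 + D1 ([:0,1:] * ?Z)"
        by (simp add: D1_add mult.commute)
      also have "\<dots> = - ([:0,1:] * ?Z)"
      proof -
        have e: "[:0,1:] * pderiv ?Z = ?Z" by (rule sym[OF Zeq])
        show ?thesis by (simp only: True D1_X e add_0_left)
      qed
      also have "\<dots> \<noteq> 0" using Z0 by simp
      finally show ?thesis using good[of "[:0,1:]"] hs[of "[:0,1:]"]
        by (intro exI[of _ "w1 + \<Prod>?S * [:0,1:]"]) (simp add: add.assoc)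
    qed
  qed
qed


lemma sqf_rep:
  fixes g h :: "'a::{finite,field_gcd} poly"
  assumes g0: "g \<noteq> 0" and sq: "squarefree (gcd g h)"
  shows "\<exists>P. lead_coeff P = 1 \<and> squarefree P \<and> P mod g = h mod g"
proof -
  let ?q = "CARD('a)"
  let ?X = "[:0,1:] :: 'a poly"
  have q2: "?q \<ge> 2" by (rule ff_card_ge2)
  obtain c0 where c0a: "\<forall>\<pi>. prime \<pi> \<longrightarrow> \<pi> dvd g \<longrightarrow> \<not> \<pi>^2 dvd h + g * c0"
    and c0b: "D1 (h + g * c0) \<noteq> 0"
    using step1[OF g0 sq] by blast
  define H where "H = h + g * c0"
  let ?S = "prime_factors (D1 H)"
  let ?B = "\<lambda>\<pi> w. \<not> \<pi> dvd g \<and> \<pi> dvd pderiv H + (g * w) ^ ?q"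
  have fin: "finite ?S" by simp
  have pr: "\<forall>\<pi>\<in>?S. prime \<pi>" by (auto simp: in_prime_factors_iff)
  have cls: "\<forall>\<pi>\<in>?S. \<forall>a b. ?B \<pi> a \<longrightarrow> \<pi> dvd b - a \<longrightarrow> ?B \<pi> b"
  proof (intro ballI allI impI)
    fix \<pi> a b assume p: "\<pi> \<in> ?S" and ba: "?B \<pi> a" and d: "\<pi> dvd b - a"
    have "\<pi> dvd g * b - g * a" using d by (metis dvd_mult2 right_diff_distrib mult.commute)
    hence "\<pi> dvd (g * b) ^ ?q - (g * a) ^ ?q" by (rule pow_cong_dvd)
    moreover have "pderiv H + (g * b) ^ ?q = (pderiv H + (g * a) ^ ?q) + ((g * b) ^ ?q - (g * a) ^ ?q)"
      by simp
    ultimately show "?B \<pi> b" using ba by (metis dvd_add)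
  qed
  have uniq: "\<forall>\<pi>\<in>?S. \<forall>a b. ?B \<pi> a \<longrightarrow> ?B \<pi> b \<longrightarrow> \<pi> dvd a - b"
  proof (intro ballI allI impI)
    fix \<pi> a b assume p: "\<pi> \<in> ?S" and ba: "?B \<pi> a" and bb: "?B \<pi> b"
    have pp: "prime \<pi>" using p by (auto simp: in_prime_factors_iff)
    have "\<pi> dvd (pderiv H + (g * a) ^ ?q) - (pderiv H + (g * b) ^ ?q)" using ba bb by (metis dvd_diff)
    hence "\<pi> dvd (g * a) ^ (?q ^ 1) - (g * b) ^ (?q ^ 1)" by simp
    hence "\<pi> dvd (g * a - g * b) ^ (?q ^ 1)" by (simp only: frob_pow_diff)
    hence "\<pi> dvd g * (a - b)" using pp by (metis prime_dvd_power right_diff_distrib)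
    thus "\<pi> dvd a - b" using pp ba by (simp add: prime_dvd_mult_iff)
  qed
  obtain w2 where w2: "\<forall>\<pi>\<in>?S. \<not> ?B \<pi> w2" using avoid_classes[OF fin pr cls uniq] by blast
  have ext: "\<forall>\<pi>\<in>?S. \<not> ?B \<pi> (w2 + \<Prod>?S * s)" for s
    by (rule avoid_ext[OF fin cls w2])
  define M where "M = \<Prod>?S"
  have M0: "M \<noteq> 0" unfolding M_def using prod_primes_nz[OF fin pr] .
  define k where "k = degree w2 + degree H + 1"
  define c where "c = inverse (lead_coeff g * lead_coeff M)"
  define s where "s = monom c k"
  define w where "w = w2 + M * s"
  have lcg: "lead_coeff g \<noteq> 0" "lead_coeff M \<noteq> 0" using g0 M0 by auto
  have c0': "c \<noteq> 0" unfolding c_def using lcg by simp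
  have degMs: "degree (M * s) = degree M + k" unfolding s_def using M0 c0'
    by (simp add: degree_mult_eq degree_monom_eq)
  have lcMs: "lead_coeff (M * s) = lead_coeff M * c" unfolding s_def
    by (simp add: lead_coeff_mult degree_monom_eq c0')
  have dw: "degree w = degree M + k" and lcw: "lead_coeff w = lead_coeff M * c"
  proof -
    have lt: "degree w2 < degree (M * s)" using degMs unfolding k_def by simp
    show "degree w = degree M + k" unfolding w_def using degree_add_eq_right[OF lt] degMs by simp
    show "lead_coeff w = lead_coeff M * c" unfolding w_def using lead_coeff_add_le[OF lt] lcMs by simp
  qed
  have lcgw: "lead_coeff (g * w) = 1" using lcw lcg unfolding c_def by (simp add: lead_coeff_mult field_simps)
  have w0: "w \<noteq> 0" using lcgw by auto
  define Y where "Y = (g * w) ^ ?q"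
  define P where "P = H + ?X * Y"
  have degY: "degree Y = ?q * (degree g + degree w)"
    unfolding Y_def using g0 w0 by (simp add: degree_power_eq degree_mult_eq)
  have lcY: "lead_coeff Y = 1" unfolding Y_def by (simp add: lead_coeff_power lcgw)
  have Y0: "Y \<noteq> 0" using lcY by auto
  have degXY: "degree (?X * Y) = Suc (degree Y)" using Y0 by (simp add: degree_mult_eq)
  have lt2: "degree H < degree (?X * Y)"
  proof -
    have "degree H < degree w" using dw unfolding k_def by simp
    also have "\<dots> \<le> degree g + degree w" by simp
    also have "\<dots> \<le> ?q * (degree g + degree w)" using q2 by simp
    also have "\<dots> < degree (?X * Y)" using degXY degY by simp
    finally show ?thesis .
  qed
  have lcP: "lead_coeff P = 1" unfolding P_def using lead_coeff_add_le[OF lt2] lcY Y0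
    by (simp add: lead_coeff_mult)
  have P0: "P \<noteq> 0" using lcP by auto
  have modP: "P mod g = h mod g"
  proof -
    have "(g * w) ^ ?q = (g * w) ^ Suc (?q - 1)" using q2 by simp
    also have "\<dots> = g * (w * (g * w) ^ (?q - 1))" by (simp only: power_Suc mult.assoc)
    finally have "g dvd Y" unfolding Y_def by (rule dvdI)
    hence "g dvd g * c0 + ?X * Y" by (rule dvd_add[OF dvd_triv_left dvd_mult])
    moreover have "P - h = g * c0 + ?X * Y" unfolding P_def H_def by simp
    ultimately have "g dvd P - h" by simp
    thus ?thesis by (simp add: mod_eq_dvd_iff)
  qed
  have pY: "pderiv Y = 0" unfolding Y_def by (rule pderiv_pow_card)
  have pXY: "pderiv (?X * Y) = Y" using pY by (simp add: pderiv_pCons)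
  have pdP: "pderiv P = pderiv H + Y"
    unfolding P_def pderiv_add pXY ..
  have D1P: "P - ?X * pderiv P = D1 H"
  proof -
    have "P - ?X * pderiv P = (H + ?X * Y) - ?X * (pderiv H + Y)"
      by (subst pdP) (simp only: P_def)
    also have "\<dots> = D1 H" by (simp only: D1_def algebra_simps)
    finally show ?thesis .
  qed
  have sqP: "squarefree P"
  proof (rule squarefreeI, rule ccontr)
    fix x assume x2: "x ^ 2 dvd P" and nu: "\<not> x dvd 1"
    have x0: "x \<noteq> 0" using x2 P0 by auto
    obtain \<pi> where px: "\<pi> dvd x" and pp: "prime \<pi>" using prime_divisor_exists[OF x0 nu] by blast
    have p2: "\<pi>^2 dvd P" by (rule dvd_trans[OF dvd_power_same[OF px] x2])
    have pdv: "\<pi> dvd pderiv P" using sq_dvd_pderiv[OF p2] .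
    have "\<pi> dvd \<pi>^2" by (simp add: power2_eq_square)
    hence pP: "\<pi> dvd P" using p2 by (rule dvd_trans)
    have "\<pi> dvd P - ?X * pderiv P" by (rule dvd_diff[OF pP dvd_mult[OF pdv]])
    hence "\<pi> dvd D1 H" unfolding D1P .
    hence inS: "\<pi> \<in> ?S" using pp c0b unfolding H_def by (simp add: in_prime_factors_iff)
    show False
    proof (cases "\<pi> dvd g")
      case True
      have "\<pi> dvd g * w" using True by (rule dvd_mult2)
      hence "\<pi>^2 dvd (g * w)^2" by (rule dvd_power_same)
      moreover have "(g * w)^2 dvd Y" unfolding Y_def using q2 by (simp add: le_imp_power_dvd)
      ultimately have "\<pi>^2 dvd Y" by (rule dvd_trans)
      hence "\<pi>^2 dvd ?X * Y" by (rule dvd_mult)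
      hence "\<pi>^2 dvd P - ?X * Y" using p2 by (simp add: dvd_diff)
      hence "\<pi>^2 dvd h + g * c0" unfolding P_def H_def by simp
      thus False using c0a pp True by simp
    next
      case False
      have "?B \<pi> w" using False pdv unfolding pdP Y_def by simp
      moreover have "\<not> ?B \<pi> (w2 + \<Prod>?S * s)" using ext[of s] inS by (rule bspec)
      ultimately show False unfolding w_def M_def by contradiction
    qed
  qed
  show ?thesis using lcP sqP modP by blast
qed


abbreviation XX :: "'a::comm_ring_1 poly" where "XX \<equiv> [:0,1:]"

definition FF :: "nat \<Rightarrow> 'a::{finite,field} poly" where
  "FF k = XX ^ (CARD('a) ^ k) - XX"

lemma pow_cong_dvd':
  fixes m x y :: "'a::comm_ring_1"
  assumes "m dvd x - y"
  shows "m dvd x ^ n - y ^ n"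
proof (induction n)
  case (Suc n)
  have "x ^ Suc n - y ^ Suc n = x * (x ^ n - y ^ n) + (x - y) * y ^ n"
    by (simp add: algebra_simps)
  then show ?case using Suc assms by (simp add: dvd_add dvd_mult dvd_mult2)
qed simp

lemma diff_add_diff_cancel: "(a - b) + (b - c) = (a - (c::'a::ab_group_add))" by simp

lemma finite_range_mod:
  fixes m :: "'a::{finite,field} poly"
  assumes "m \<noteq> 0"
  shows "finite (range (\<lambda>i. f i mod m))"
proof -
  have "range (\<lambda>i. f i mod m) \<subseteq> {p. degree p < degree m} \<union> {0}"
    using degree_mod_less'[OF assms] by auto
  moreover have "finite ({p :: 'a poly. degree p < degree m} \<union> {0})"
    using finite_deg_less by simp
  ultimately show ?thesis by (rule finite_subset)
qed

lemma pigeon: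
  fixes f :: "nat \<Rightarrow> 'b"
  assumes "finite (range f)"
  shows "\<exists>i j. i < j \<and> f i = f j"
proof -
  have "\<not> inj f" using assms infinite_UNIV_nat finite_imageD by blast
  then obtain i j where "i \<noteq> j" "f i = f j" unfolding inj_def by blast
  show ?thesis
  proof (cases "i < j")
    case True then show ?thesis using \<open>f i = f j\<close> by blast
  next
    case False then have "j < i" using \<open>i \<noteq> j\<close> by simp
    then show ?thesis using \<open>f i = f j\<close> by (intro exI[of _ j] exI[of _ i]) simp
  qed
qed

lemma sqf_dvd_pow:
  fixes P Y :: "'a::{field_gcd} poly"
  assumes sq: "squarefree P" and d: "P dvd Y ^ n"
  shows "P dvd Y"
proof (cases "Y = 0")
  case True then show ?thesis by simp
next
  case False
  have P0: "P \<noteq> 0" using sq by auto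
  show ?thesis
  proof (rule multiplicity_le_imp_dvd[OF P0])
    fix p :: "'a poly" assume pp: "prime p"
    have le1: "multiplicity p P \<le> 1" using sq P0 pp by (simp add: squarefree_factorial_semiring'')
    show "multiplicity p P \<le> multiplicity p Y"
    proof (cases "multiplicity p P = 0")
      case True then show ?thesis by simp
    next
      case nz: False
      hence "p dvd P" using prime_multiplicity_gt_zero_iff[of p P] pp P0 by auto
      hence "p dvd Y ^ n" using d by (rule dvd_trans)
      hence "p dvd Y" by (rule prime_dvd_power[OF pp])
      hence "multiplicity p Y > 0" using prime_multiplicity_gt_zero_iff[of p Y] pp False by auto
      thus ?thesis using le1 by simp
    qed
  qed
qed

lemma FF_pow_eq:
  "(XX :: 'a::{finite,field} poly) ^ (CARD('a) ^ (a + b)) = (XX ^ (CARD('a) ^ a)) ^ (CARD('a) ^ b)"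
  by (simp add: power_add power_mult)

lemma sqf_FF:
  fixes P :: "'a::{finite,field_gcd} poly"
  assumes sq: "squarefree P"
  shows "\<exists>K>0. P dvd FF K"
proof -
  have P0: "P \<noteq> 0" using sq by auto
  obtain i j where ij: "i < j" "XX ^ (CARD('a) ^ i) mod P = (XX :: 'a poly) ^ (CARD('a) ^ j) mod P"
    using pigeon[OF finite_range_mod[OF P0, of "\<lambda>i. XX ^ (CARD('a) ^ i)"]] by blast
  define K where "K = j - i"
  have jK: "j = K + i" using ij unfolding K_def by simp
  have "P dvd XX ^ (CARD('a) ^ i) - XX ^ (CARD('a) ^ j)" using ij(2) by (simp add: mod_eq_dvd_iff)
  hence "P dvd XX ^ (CARD('a) ^ j) - XX ^ (CARD('a) ^ i)" by (simp add: dvd_diff_commute)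
  also have "XX ^ (CARD('a) ^ j) - XX ^ (CARD('a) ^ i) = (FF K :: 'a poly) ^ (CARD('a) ^ i)"
    unfolding jK FF_pow_eq FF_def frob_pow_diff ..
  finally have "P dvd FF K" by (rule sqf_dvd_pow[OF sq])
  moreover have "K > 0" using ij unfolding K_def by simp
  ultimately show ?thesis by blast
qed

lemma FF_mult_dvd:
  fixes m :: "'a::{finite,field} poly"
  assumes "m dvd XX ^ (CARD('a) ^ a) - XX"
  shows "m dvd XX ^ (CARD('a) ^ (a * k)) - XX"
proof (induction k)
  case 0 then show ?case by simp
next
  case (Suc k)
  have e: "(XX :: 'a poly) ^ (CARD('a) ^ (a * Suc k)) = (XX ^ (CARD('a) ^ a)) ^ (CARD('a) ^ (a * k))"
    by (simp add: power_add power_mult mult.commute)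
  have "m dvd (XX ^ (CARD('a) ^ a)) ^ (CARD('a) ^ (a * k)) - XX ^ (CARD('a) ^ (a * k))"
    by (rule pow_cong_dvd'[OF assms])
  hence "m dvd ((XX ^ (CARD('a) ^ a)) ^ (CARD('a) ^ (a * k)) - XX ^ (CARD('a) ^ (a * k)))
               + (XX ^ (CARD('a) ^ (a * k)) - XX)" using Suc by (rule dvd_add)
  thus ?case unfolding e diff_add_diff_cancel .
qed

lemma FF_dvd:
  assumes "a dvd b"
  shows "(FF a :: 'a::{finite,field} poly) dvd FF b"
proof -
  obtain k where "b = a * k" using assms by (elim dvdE)
  thus ?thesis unfolding FF_def using FF_mult_dvd[of "FF a" a k] by (simp add: FF_def)
qed

lemma Z_dvd:
  "(FF M + 1 :: 'a::{finite,field} poly) dvd FF (M * CARD('a))"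
proof -
  let ?Z = "FF M + 1 :: 'a poly"
  let ?q = "CARD('a)"
  have base: "?Z dvd XX ^ (?q ^ M) - (XX - 1)" unfolding FF_def by (simp add: algebra_simps)
  have gen: "?Z dvd XX ^ (?q ^ (M * j)) - (XX - of_nat j)" for j
  proof (induction j)
    case 0 then show ?case by simp
  next
    case (Suc j)
    have e: "(XX :: 'a poly) ^ (?q ^ (M * Suc j)) = (XX ^ (?q ^ M)) ^ (?q ^ (M * j))"
      by (simp add: power_add power_mult mult.commute)
    have "?Z dvd (XX ^ (?q ^ M)) ^ (?q ^ (M * j)) - (XX - 1) ^ (?q ^ (M * j))"
      by (rule pow_cong_dvd'[OF base])
    also have "(XX - 1 :: 'a poly) ^ (?q ^ (M * j)) = XX ^ (?q ^ (M * j)) - 1"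
      by (simp add: frob_pow_diff)
    finally have d: "?Z dvd ((XX ^ (?q ^ M)) ^ (?q ^ (M * j)) - (XX ^ (?q ^ (M * j)) - 1))
                    + (XX ^ (?q ^ (M * j)) - (XX - of_nat j))"
      using Suc by (rule dvd_add)
    have eq: "((XX ^ (?q ^ M)) ^ (?q ^ (M * j)) - (XX ^ (?q ^ (M * j)) - 1))
                    + (XX ^ (?q ^ (M * j)) - (XX - of_nat j)) = (XX ^ (?q ^ M)) ^ (?q ^ (M * j)) - (XX - of_nat (Suc j))"
      by (simp add: algebra_simps)
    have "?Z dvd (XX ^ (?q ^ M)) ^ (?q ^ (M * j)) - (XX - of_nat (Suc j))"
      using d unfolding eq .
    thus ?case unfolding e .
  qed
  show ?thesis using gen[of ?q] unfolding FF_def by (simp add: ff_char_card_poly)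
qed

lemma coprime_FF1:
  fixes A :: "'a::{finite,field_gcd} poly"
  assumes "A dvd FF a"
  shows "coprime A (FF a + 1)"
proof (rule coprimeI)
  fix c assume "c dvd A" "c dvd FF a + 1"
  hence "c dvd FF a" "c dvd FF a + 1" using assms by (auto intro: dvd_trans)
  hence "c dvd (FF a + 1) - FF a" by (rule dvd_diff[rotated])
  thus "is_unit c" by simp
qed

lemma coprime_prod_right:
  fixes B :: "'b \<Rightarrow> 'a::{field_gcd} poly"
  assumes "finite A" "\<forall>i\<in>A. coprime a (B i)"
  shows "coprime a (prod B A)"
  using assms by (induction A rule: finite_induct) auto

lemma prod_coprime_dvd:
  fixes B :: "'b \<Rightarrow> 'a::{field_gcd} poly"
  assumes "finite A" "\<forall>i\<in>A. B i dvd N" "\<forall>i\<in>A. \<forall>j\<in>A. i \<noteq> j \<longrightarrow> coprime (B i) (B j)"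
  shows "prod B A dvd N"
  using assms
proof (induction A rule: finite_induct)
  case empty then show ?case by simp
next
  case (insert x A)
  have c: "coprime (B x) (prod B A)"
    using insert by (intro coprime_prod_right) auto
  have "prod B A dvd N" using insert by auto
  moreover have "B x dvd N" using insert by auto
  ultimately show ?case using insert.hyps c by (simp add: divides_mult)
qed


lemma gen_mult_dvd:
  fixes m y :: "'a::{finite,field} poly"
  assumes "m dvd y ^ (CARD('a) ^ a) - y"
  shows "m dvd y ^ (CARD('a) ^ (a * k)) - y"
proof (induction k)
  case 0 then show ?case by simp
next
  case (Suc k)
  have e: "y ^ (CARD('a) ^ (a * Suc k)) = (y ^ (CARD('a) ^ a)) ^ (CARD('a) ^ (a * k))"
    by (simp add: power_add power_mult mult.commute)
  have "m dvd (y ^ (CARD('a) ^ a)) ^ (CARD('a) ^ (a * k)) - y ^ (CARD('a) ^ (a * k))"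
    by (rule pow_cong_dvd'[OF assms])
  hence "m dvd ((y ^ (CARD('a) ^ a)) ^ (CARD('a) ^ (a * k)) - y ^ (CARD('a) ^ (a * k)))
               + (y ^ (CARD('a) ^ (a * k)) - y)" using Suc by (rule dvd_add)
  thus ?case unfolding e diff_add_diff_cancel .
qed

lemma g_period:
  fixes g :: "'a::{finite,field_gcd} poly"
  assumes "g \<noteq> 0"
  shows "\<exists>i0 p0. p0 > 0 \<and> g dvd XX ^ (CARD('a) ^ (i0 + p0)) - XX ^ (CARD('a) ^ i0)"
proof -
  obtain i j where ij: "i < j" "XX ^ (CARD('a) ^ i) mod g = (XX :: 'a poly) ^ (CARD('a) ^ j) mod g"
    using pigeon[OF finite_range_mod[OF assms, of "\<lambda>i. XX ^ (CARD('a) ^ i)"]] by blast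
  have "g dvd XX ^ (CARD('a) ^ i) - XX ^ (CARD('a) ^ j)" using ij(2) by (simp add: mod_eq_dvd_iff)
  hence "g dvd XX ^ (CARD('a) ^ (i + (j - i))) - XX ^ (CARD('a) ^ i)" using ij(1)
    by (simp add: dvd_diff_commute)
  thus ?thesis using ij(1) by (intro exI[of _ i] exI[of _ "j - i"]) simp
qed

lemma per_shift:
  fixes g :: "'a::{finite,field} poly"
  assumes per: "g dvd XX ^ (CARD('a) ^ (i0 + p0)) - XX ^ (CARD('a) ^ i0)" and x: "x \<ge> i0"
  shows "g dvd XX ^ (CARD('a) ^ (x + k * p0)) - XX ^ (CARD('a) ^ x)"
proof -
  let ?q = "CARD('a)"
  have one: "g dvd XX ^ (?q ^ (y + p0)) - XX ^ (?q ^ y)" if "y \<ge> i0" for y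
  proof -
    have "?q ^ (y + p0) = ?q ^ (i0 + p0) * ?q ^ (y - i0)" using that by (simp add: power_add[symmetric] add.commute)
    hence e1: "(XX :: 'a poly) ^ (?q ^ (y + p0)) = (XX ^ (?q ^ (i0 + p0))) ^ (?q ^ (y - i0))"
      by (simp add: power_mult)
    have "?q ^ y = ?q ^ i0 * ?q ^ (y - i0)" using that by (simp add: power_add[symmetric])
    hence e2: "(XX :: 'a poly) ^ (?q ^ y) = (XX ^ (?q ^ i0)) ^ (?q ^ (y - i0))"
      by (simp add: power_mult)
    show ?thesis unfolding e1 e2 by (rule pow_cong_dvd'[OF per])
  qed
  show ?thesis
  proof (induction k)
    case 0 then show ?case by simp
  next
    case (Suc k)
    have "g dvd XX ^ (?q ^ (x + k * p0 + p0)) - XX ^ (?q ^ (x + k * p0))" using one x by simp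
    hence "g dvd (XX ^ (?q ^ (x + k * p0 + p0)) - XX ^ (?q ^ (x + k * p0)))
                + (XX ^ (?q ^ (x + k * p0)) - XX ^ (?q ^ x))" using Suc by (rule dvd_add)
    thus ?case unfolding diff_add_diff_cancel by (simp add: ac_simps)
  qed
qed

lemma per_eq:
  fixes g :: "'a::{finite,field} poly"
  assumes per: "g dvd XX ^ (CARD('a) ^ (i0 + p0)) - XX ^ (CARD('a) ^ i0)"
    and "x \<ge> i0" "y \<ge> i0" "x mod p0 = y mod p0"
  shows "g dvd XX ^ (CARD('a) ^ x) - XX ^ (CARD('a) ^ y)"
proof -
  have *: "g dvd XX ^ (CARD('a) ^ b) - XX ^ (CARD('a) ^ a)"
    if "i0 \<le> a" "a \<le> b" "a mod p0 = b mod p0" for a b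
  proof -
    have "p0 dvd b - a" using that mod_eq_dvd_iff_nat[of a b p0] by simp
    then obtain k where "b - a = p0 * k" by (elim dvdE)
    hence "b = a + k * p0" using that by (simp add: mult.commute)
    thus ?thesis using per_shift[OF per \<open>i0 \<le> a\<close>, of k] by simp
  qed
  show ?thesis
  proof (cases "x \<le> y")
    case True then show ?thesis using *[of x y] assms by (simp add: dvd_diff_commute)
  next
    case False then show ?thesis using *[of y x] assms by simp
  qed
qed

definition Lf :: "nat \<Rightarrow> 'a::{finite,field} poly \<Rightarrow> 'a poly" where
  "Lf E a = (\<Sum>i<Suc CARD('a). a ^ (CARD('a) ^ (E * i)))"

lemma Lf_diff: "Lf E (a - b) = Lf E a - Lf E b"
  unfolding Lf_def by (simp add: frob_pow_diff sum_subtractf)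

lemma Lf_pow: fixes a :: "'a::{finite,field} poly" shows "(Lf E a) ^ (CARD('a) ^ k) = Lf E (a ^ (CARD('a) ^ k))"
  unfolding Lf_def frob_pow_sum
  by (intro sum.cong refl) (simp add: power_mult[symmetric] mult.commute)

lemma Lf_tele: fixes v :: "'a::{finite,field} poly" shows "(Lf E v) ^ (CARD('a) ^ E) - Lf E v = v ^ (CARD('a) ^ (E * Suc CARD('a))) - v"
proof -
  let ?f = "\<lambda>i. v ^ (CARD('a) ^ (E * i))"
  have "(Lf E v) ^ (CARD('a) ^ E) = (\<Sum>i<Suc CARD('a). ?f (Suc i))"
    unfolding Lf_def frob_pow_sum
    by (intro sum.cong refl) (simp add: power_mult[symmetric] power_add[symmetric] mult.commute)
  hence "(Lf E v) ^ (CARD('a) ^ E) - Lf E v = (\<Sum>i<Suc CARD('a). ?f (Suc i) - ?f i)"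
    unfolding Lf_def by (simp add: sum_subtractf)
  also have "\<dots> = ?f (Suc CARD('a)) - ?f 0" by (rule sum_lessThan_telescope)
  finally show ?thesis by simp
qed

lemma pcompose_XX_pow: "(XX ^ n) \<circ>\<^sub>p p = p ^ n"
  by (induction n) (simp_all add: pcompose_mult pcompose_pCons pcompose_1)

lemma Lf_pcompose: "Lf E a = (Lf E XX) \<circ>\<^sub>p a"
  unfolding Lf_def pcompose_sum pcompose_XX_pow ..

lemma sum_split_add:
  fixes w :: "nat \<Rightarrow> 'b::comm_monoid_add"
  shows "(\<Sum>i<a + b. w i) = (\<Sum>i<a. w i) + (\<Sum>i<b. w (a + i))"
  by (induction b) (simp_all add: add.assoc)

theorem compose_FF:
  fixes f0 :: "'a::{finite,field} poly"
  assumes d: "f0 dvd FF K0"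
  shows "(f0 \<circ>\<^sub>p Lf E XX) dvd FF (K0 * (E * Suc CARD('a) * CARD('a)))"
proof -
  let ?q = "CARD('a)"
  let ?L = "Lf E XX :: 'a poly"
  let ?f = "f0 \<circ>\<^sub>p ?L"
  let ?N = "E * Suc ?q"
  define v where "v = (XX :: 'a poly) ^ (?q ^ K0) - XX"
  obtain r where r: "FF K0 = f0 * r" using d by (elim dvdE)
  have "FF K0 \<circ>\<^sub>p ?L = ?f * (r \<circ>\<^sub>p ?L)" unfolding r by (simp add: pcompose_mult)
  hence d1: "?f dvd FF K0 \<circ>\<^sub>p ?L" by simp
  have "FF K0 \<circ>\<^sub>p ?L = ?L ^ (?q ^ K0) - ?L"
    unfolding FF_def by (simp add: pcompose_diff pcompose_XX_pow pcompose_pCons)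
  also have "\<dots> = Lf E v" unfolding Lf_pow v_def Lf_diff ..
  finally have d2: "?f dvd Lf E v" using d1 by simp
  have "Lf E v dvd (Lf E v) ^ (?q ^ E) - Lf E v"
  proof -
    have "(Lf E v) ^ (?q ^ E) - Lf E v = Lf E v * ((Lf E v) ^ (?q ^ E - 1) - 1)"
      using one_le_power[of ?q E] ff_card_ge2[where 'a='a]
      by (simp add: algebra_simps power_Suc[symmetric])
    thus ?thesis by simp
  qed
  hence d3: "?f dvd v ^ (?q ^ ?N) - v" using d2 unfolding Lf_tele by (rule dvd_trans[rotated])
  define w where "w i = v ^ (?q ^ (K0 * i))" for i
  define T where "T j = (\<Sum>i<j. w i)" for j
  have exact: "XX ^ (?q ^ (K0 * j)) = XX + T j" for j
  proof (induction j)
    case 0 then show ?case by (simp add: T_def)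
  next
    case (Suc j)
    have "(XX :: 'a poly) ^ (?q ^ (K0 * Suc j)) = (XX ^ (?q ^ K0)) ^ (?q ^ (K0 * j))"
      by (simp add: power_add power_mult mult.commute)
    also have "XX ^ (?q ^ K0) = XX + v" unfolding v_def by simp
    also have "(XX + v) ^ (?q ^ (K0 * j)) = XX ^ (?q ^ (K0 * j)) + w j"
      unfolding w_def by (rule frob_pow_add)
    finally show ?case using Suc by (simp add: T_def)
  qed
  have wper: "?f dvd w (?N * k + i) - w i" for k i
  proof -
    have "?f dvd v ^ (?q ^ (?N * (K0 * k))) - v" by (rule gen_mult_dvd[OF d3])
    hence "?f dvd (v ^ (?q ^ (?N * (K0 * k)))) ^ (?q ^ (K0 * i)) - v ^ (?q ^ (K0 * i))"
      by (rule pow_cong_dvd')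
    moreover have "w (?N * k + i) = (v ^ (?q ^ (?N * (K0 * k)))) ^ (?q ^ (K0 * i))"
      unfolding w_def by (simp add: power_mult[symmetric] power_add[symmetric] algebra_simps)
    ultimately show ?thesis unfolding w_def by simp
  qed
  have Tk: "?f dvd T (?N * k) - of_nat k * T ?N" for k
  proof (induction k)
    case 0 then show ?case by (simp add: T_def)
  next
    case (Suc k)
    have split: "T (?N * Suc k) = T (?N * k) + (\<Sum>i<?N. w (?N * k + i))"
    proof -
      have "?N * Suc k = ?N * k + ?N" by simp
      thus ?thesis unfolding T_def by (simp only: sum_split_add)
    qed
    have "?f dvd (\<Sum>i<?N. w (?N * k + i) - w i)" by (rule dvd_sum) (rule wper)
    hence "?f dvd (T (?N * k) - of_nat k * T ?N) + (\<Sum>i<?N. w (?N * k + i) - w i)"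
      using Suc by (rule dvd_add[rotated])
    moreover have "(T (?N * k) - of_nat k * T ?N) + (\<Sum>i<?N. w (?N * k + i) - w i)
        = T (?N * Suc k) - of_nat (Suc k) * T ?N"
      unfolding split by (simp add: sum_subtractf T_def algebra_simps)
    ultimately show ?case by simp
  qed
  have "T (?N * ?q) = XX ^ (?q ^ (K0 * (?N * ?q))) - XX" using exact[of "?N * ?q"] by simp
  moreover have "?f dvd T (?N * ?q)" using Tk[of ?q] by (simp add: ff_char_card_poly)
  ultimately show ?thesis unfolding FF_def by (simp add: mult.assoc)
qed


lemma decomp_coprime:
  fixes q :: nat
  assumes "W > 0"
  shows "\<exists>T s e. W = T * s \<and> coprime T q \<and> s dvd q ^ e"
  using assms
proof (induction W rule: less_induct)
  case (less W)
  show ?case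
  proof (cases "coprime W q")
    case True then show ?thesis by (intro exI[of _ W] exI[of _ 1] exI[of _ 0]) simp
  next
    case False
    define d where "d = gcd W q"
    have d1: "d \<noteq> 1" using False unfolding d_def by (simp add: coprime_iff_gcd_eq_1)
    have dW: "d dvd W" unfolding d_def by simp
    then obtain W1 where W1: "W = d * W1" by (elim dvdE)
    have d0: "d > 0" using less.prems unfolding d_def by simp
    have W10: "W1 > 0" using W1 less.prems by (cases W1) auto
    have "d \<ge> 2" using d1 d0 by simp
    hence "W1 * 2 \<le> W1 * d" by simp
    hence "W1 < W" using W1 W10 by (simp add: mult.commute)
    moreover note W10
    ultimately obtain T s e where "W1 = T * s" "coprime T q" "s dvd q ^ e" using less.IH by blast
    moreover have "d * s dvd q ^ Suc e" using \<open>s dvd q ^ e\<close> unfolding d_def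
      by (simp add: mult_dvd_mono)
    ultimately show ?thesis using W1 by (intro exI[of _ T] exI[of _ "d * s"] exI[of _ "Suc e"]) (simp add: ac_simps)
  qed
qed

lemma degree_XX_pow [simp]: "degree ((XX :: 'a::{comm_ring_1,zero_neq_one} poly) ^ n) = n"
  by (simp add: Xpow_monom degree_monom_eq)

lemma Z_props:
  fixes m :: nat
  assumes "m > 0"
  shows "degree (FF m + 1 :: 'a::{finite,field} poly) = CARD('a) ^ m"
    and "lead_coeff (FF m + 1 :: 'a::{finite,field} poly) = 1"
proof -
  have q2: "CARD('a) \<ge> 2" by (rule ff_card_ge2)
  have "CARD('a) ^ m \<ge> 2 ^ m" using q2 by (simp add: power_mono)
  moreover have "(2::nat) ^ m \<ge> 2" using assms by (cases m) auto
  ultimately have gt: "CARD('a) ^ m > 1" by simp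
  have e: "FF m + 1 = (XX :: 'a poly) ^ (CARD('a) ^ m) + (1 - XX)" unfolding FF_def by simp
  have dl: "degree (1 - XX :: 'a poly) < degree ((XX :: 'a poly) ^ (CARD('a) ^ m))"
  proof -
    have "degree (1 - XX :: 'a poly) \<le> max (degree (1::'a poly)) (degree (XX :: 'a poly))"
      by (rule degree_diff_le_max)
    thus ?thesis using gt by simp
  qed
  show "degree (FF m + 1 :: 'a poly) = CARD('a) ^ m" unfolding e using degree_add_eq_left[OF dl] by simp
  have "lead_coeff ((1 - XX) + (XX :: 'a poly) ^ (CARD('a) ^ m)) = lead_coeff ((XX :: 'a poly) ^ (CARD('a) ^ m))"
    by (rule lead_coeff_add_le[OF dl])
  moreover have "lead_coeff ((XX :: 'a poly) ^ (CARD('a) ^ m)) = 1" by (simp add: Xpow_monom degree_monom_eq)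
  ultimately show "lead_coeff (FF m + 1 :: 'a poly) = 1" unfolding e by (simp only: add.commute)
qed


lemma L_props:
  assumes E0: "E > 0"
  shows "degree (Lf E XX :: 'a::{finite,field} poly) = CARD('a) ^ (E * CARD('a))"
    and "lead_coeff (Lf E XX :: 'a::{finite,field} poly) = 1"
proof -
  let ?q = "CARD('a)"
  have q2: "?q \<ge> 2" by (rule ff_card_ge2)
  have e: "Lf E XX = (\<Sum>i<?q. (XX :: 'a poly) ^ (?q ^ (E * i))) + XX ^ (?q ^ (E * ?q))"
    unfolding Lf_def by simp
  have dl: "degree (\<Sum>i<?q. (XX :: 'a poly) ^ (?q ^ (E * i))) < degree ((XX :: 'a poly) ^ (?q ^ (E * ?q)))"
  proof -
    have "degree (\<Sum>i<?q. (XX :: 'a poly) ^ (?q ^ (E * i))) < ?q ^ (E * ?q)"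
    proof (rule degree_sum_less)
      fix i assume "i \<in> {..<?q}"
      hence "E * i < E * ?q" using E0 by simp
      hence "?q ^ (E * i) < ?q ^ (E * ?q)" using q2 by (intro power_strict_increasing) auto
      thus "degree ((XX :: 'a poly) ^ (?q ^ (E * i))) < ?q ^ (E * ?q)" by simp
    qed (use q2 in simp)
    thus ?thesis by simp
  qed
  show "degree (Lf E XX :: 'a poly) = ?q ^ (E * ?q)" unfolding e using degree_add_eq_right[OF dl] by simp
  have "lead_coeff (Lf E XX :: 'a poly) = lead_coeff ((XX :: 'a poly) ^ (?q ^ (E * ?q)))"
    unfolding e by (rule lead_coeff_add_le[OF dl])
  also have "\<dots> = 1" by (simp add: Xpow_monom degree_monom_eq)
  finally show "lead_coeff (Lf E XX :: 'a poly) = 1" .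
qed

lemma L_cong:
  fixes g :: "'a::{finite,field} poly"
  assumes per: "g dvd XX ^ (CARD('a) ^ (i0 + p0)) - XX ^ (CARD('a) ^ i0)"
    and E: "E \<ge> i0" "p0 dvd E"
  shows "g dvd Lf E XX - XX"
proof -
  let ?q = "CARD('a)"
  let ?B = "(XX :: 'a poly) ^ (?q ^ E)"
  have "Lf E XX = XX + (\<Sum>i<?q. (XX :: 'a poly) ^ (?q ^ (E * Suc i)))"
    unfolding Lf_def sum.lessThan_Suc_shift by simp
  also have "(\<Sum>i<?q. (XX :: 'a poly) ^ (?q ^ (E * Suc i)))
      = (\<Sum>i<?q. XX ^ (?q ^ (E * Suc i)) - ?B) + of_nat ?q * ?B"
    by (simp add: sum_subtractf)
  also have "of_nat ?q * ?B = 0" by (simp add: ff_char_card_poly)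
  finally have eq: "Lf E XX - XX = (\<Sum>i<?q. XX ^ (?q ^ (E * Suc i)) - ?B)" by simp
  have "g dvd (\<Sum>i<?q. XX ^ (?q ^ (E * Suc i)) - ?B)"
  proof (rule dvd_sum)
    fix i assume "i \<in> {..<?q}"
    have "E * Suc i \<ge> i0" using E by (simp add: trans_le_add1)
    moreover have "(E * Suc i) mod p0 = E mod p0" using E by (simp add: dvd_imp_mod_0)
    ultimately show "g dvd XX ^ (?q ^ (E * Suc i)) - ?B"
      using per_eq[OF per _ E(1)] by blast
  qed
  thus ?thesis unfolding eq .
qed


lemma prod_cong_pow:
  fixes g B :: "'a::comm_ring_1"
  assumes "finite A" "\<forall>k\<in>A. g dvd Z k - B"
  shows "g dvd prod Z A - B ^ card A"
  using assms
proof (induction A rule: finite_induct)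
  case empty then show ?case by simp
next
  case (insert x A)
  have "prod Z (insert x A) - B ^ card (insert x A) = Z x * (prod Z A - B ^ card A) + (Z x - B) * B ^ card A"
    using insert.hyps by (simp add: algebra_simps)
  moreover have "g dvd Z x * (prod Z A - B ^ card A)" using insert by (simp add: dvd_mult)
  moreover have "g dvd (Z x - B) * B ^ card A" using insert by (simp add: dvd_mult2)
  ultimately show ?case by (metis dvd_add)
qed

lemma two_pow_ge: "n \<ge> 1 \<Longrightarrow> 2 * n \<le> (2::nat) ^ n"
proof (induction n)
  case 0 then show ?case by simp
next
  case (Suc n)
  show ?case
  proof (cases "n = 0")
    case True then show ?thesis by simp
  next
    case False then show ?thesis using Suc by simp
  qed
qed

lemma U_add: "(q::nat) ^ (M * q ^ (i + j)) = (q ^ (M * q ^ i)) ^ (q ^ j)"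
  by (simp add: power_add power_mult[symmetric] mult.assoc)

lemma num_choice:
  fixes q :: nat
  assumes q2: "q \<ge> 2" and T0: "T > 0" and cop: "coprime T q" and M0: "M > 0"
  shows "\<exists>i1 \<delta> c. \<delta> > 0 \<and> c \<ge> 2 \<and> q ^ i0 dvd c \<and>
           T dvd D + (\<Sum>k<c. q ^ (M * q ^ (i1 + k * \<delta>)))"
proof -
  define U where "U i = q ^ (M * q ^ i)" for i
  have fr: "finite (range (\<lambda>i. U i mod T))"
    by (rule finite_subset[of _ "{..<T}"]) (use T0 in auto)
  obtain i1 i2 where i12: "i1 < i2" "U i1 mod T = U i2 mod T"
    using pigeon[OF fr] by blast
  define \<delta> where "\<delta> = i2 - i1"
  have d0: "\<delta> > 0" using i12 unfolding \<delta>_def by simp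
  have Uper: "U (i1 + k * \<delta>) mod T = U i1 mod T" for k
  proof (induction k)
    case 0 then show ?case by simp
  next
    case (Suc k)
    have e: "i1 + Suc k * \<delta> = i2 + k * \<delta>" using i12(1) unfolding \<delta>_def by simp
    have "U (i1 + Suc k * \<delta>) = U i2 ^ (q ^ (k * \<delta>))"
      unfolding e U_def by (rule U_add)
    hence "U (i1 + Suc k * \<delta>) mod T = (U i2 mod T) ^ (q ^ (k * \<delta>)) mod T"
      by (simp add: power_mod)
    also have "\<dots> = (U i1 mod T) ^ (q ^ (k * \<delta>)) mod T" using i12(2) by simp
    also have "\<dots> = U i1 ^ (q ^ (k * \<delta>)) mod T" by (simp add: power_mod)
    also have "U i1 ^ (q ^ (k * \<delta>)) = U (i1 + k * \<delta>)" unfolding U_def by (simp add: U_add)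
    finally show ?case using Suc by simp
  qed
  define a where "a = q ^ i0 * U i1"
  have a0: "a \<noteq> 0" unfolding a_def U_def using q2 by simp
  have copa: "coprime a T"
    unfolding a_def U_def using cop by (simp add: coprime_commute)
  obtain x y where xy: "a * x = T * y + gcd a T" using bezout_nat[OF a0] by blast
  hence xy1: "a * x = T * y + 1" using copa by simp
  define c where "c = q ^ i0 * (x * (T - D mod T) + 2 * T)"
  have c2: "c \<ge> 2"
  proof -
    have "q ^ i0 \<ge> 1" using q2 by simp
    moreover have "x * (T - D mod T) + 2 * T \<ge> 2" using T0 by simp
    ultimately show ?thesis unfolding c_def by (metis le_trans mult_le_mono nat_mult_1)
  qed
  have cdiv: "q ^ i0 dvd c" unfolding c_def by simp
  have sumeq: "(\<Sum>k<c. U (i1 + k * \<delta>)) mod T = (c * U i1) mod T"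
  proof -
    have "(\<Sum>k<c. U (i1 + k * \<delta>)) mod T = (\<Sum>k<c. U (i1 + k * \<delta>) mod T) mod T"
      by (simp add: mod_sum_eq)
    also have "\<dots> = (\<Sum>k<c. U i1 mod T) mod T" by (simp add: Uper)
    also have "\<dots> = (c * (U i1 mod T)) mod T" by simp
    also have "\<dots> = (c * U i1) mod T" by (simp add: mod_mult_right_eq)
    finally show ?thesis .
  qed
  define r where "r = T - D mod T"
  have cU: "c * U i1 = r + T * (y * r + 2 * a)"
  proof -
    have "c * U i1 = (a * x) * r + 2 * T * a" unfolding c_def a_def r_def by (simp add: algebra_simps)
    also have "\<dots> = (T * y + 1) * r + 2 * T * a" by (simp add: xy1)
    finally show ?thesis by (simp add: algebra_simps)
  qed
  have dd: "D = T * (D div T) + D mod T" by simp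
  have lt: "D mod T < T" using T0 by simp
  have "D + r = T * (D div T) + T" unfolding r_def using dd lt by linarith
  hence "D + r = T * (D div T + 1)" by simp
  hence "T dvd D + c * U i1" unfolding cU by (metis add.assoc dvd_add dvd_triv_left)
  hence "(D + c * U i1) mod T = 0" by simp
  hence "(D + (\<Sum>k<c. U (i1 + k * \<delta>))) mod T = 0"
    using sumeq by (metis mod_add_right_eq)
  hence "T dvd D + (\<Sum>k<c. U (i1 + k * \<delta>))" by (simp add: dvd_eq_mod_eq_0)
  thus ?thesis using d0 c2 cdiv unfolding U_def by blast
qed


theorem main_thm:
  fixes g h :: "'a::{finite,field_gcd} poly"
  assumes g0: "g \<noteq> 0" and sq: "squarefree (gcd g h)"
  shows "infinite {f :: 'a poly. lead_coeff f = 1 \<and> carmichael_poly f \<and> f mod g = h mod g}"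
proof -
  let ?q = "CARD('a)"
  let ?S = "{f :: 'a poly. lead_coeff f = 1 \<and> carmichael_poly f \<and> f mod g = h mod g}"
  have q2: "?q \<ge> 2" by (rule ff_card_ge2)
  obtain P where P1: "lead_coeff P = 1" and P2: "squarefree P" and P3: "P mod g = h mod g"
    using sqf_rep[OF g0 sq] by blast
  have P0: "P \<noteq> 0" using P1 by auto
  obtain K where K0: "K > 0" and PK: "P dvd FF K" using sqf_FF[OF P2] by blast
  obtain i0 p0 where p00: "p0 > 0" and per: "g dvd XX ^ (?q ^ (i0 + p0)) - XX ^ (?q ^ i0)"
    using g_period[OF g0] by blast
  define M where "M = K * p0 * (i0 + 1)"
  have M0: "M > 0" using K0 p00 unfolding M_def by simp
  have MK: "K dvd M" and Mp: "p0 dvd M" unfolding M_def by simp_all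
  have Mi: "M \<ge> i0"
  proof -
    have "1 \<le> K * p0" using K0 p00 by simp
    hence "1 * (i0 + 1) \<le> K * p0 * (i0 + 1)" by (rule mult_le_mono1)
    thus ?thesis unfolding M_def by simp
  qed
  define n where "n = (XX :: 'a poly) ^ (?q ^ M) - XX"
  define Z where "Z i = FF (M * ?q ^ i) + (1 :: 'a poly)" for i
  have Zg: "g dvd Z i - (1 + n)" for i
  proof -
    have "1 \<le> ?q ^ i" using q2 by simp
    hence "M * 1 \<le> M * ?q ^ i" by (rule mult_le_mono2)
    hence h: "M \<le> M * ?q ^ i" by simp
    have "M * ?q ^ i \<ge> i0" by (rule le_trans[OF Mi h])
    moreover have "(M * ?q ^ i) mod p0 = M mod p0" using Mp by (simp add: dvd_imp_mod_0)
    ultimately have "g dvd XX ^ (?q ^ (M * ?q ^ i)) - XX ^ (?q ^ M)" using per_eq[OF per _ Mi] by blast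
    thus ?thesis unfolding Z_def n_def FF_def by (simp add: algebra_simps)
  qed
  have nil: "g dvd (1 + n) ^ (?q ^ i0) - 1"
  proof -
    have "(1 + n) ^ (?q ^ i0) = 1 + n ^ (?q ^ i0)" by (simp add: frob_pow_add)
    moreover have "n ^ (?q ^ i0) = XX ^ (?q ^ (M + i0)) - XX ^ (?q ^ i0)"
      unfolding n_def frob_pow_diff by (simp add: power_add power_mult)
    moreover have "g dvd XX ^ (?q ^ (M + i0)) - XX ^ (?q ^ i0)"
    proof -
      obtain t where "M = p0 * t" using Mp by (elim dvdE)
      hence "(M + i0) mod p0 = i0 mod p0" by simp
      thus ?thesis using per_eq[OF per _ order.refl, of "M + i0"] by simp
    qed
    ultimately show ?thesis by simp
  qed
  define D where "D = degree P"
  define W where "W = M * M * Suc ?q"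
  have W0: "W > 0" unfolding W_def using M0 by simp
  obtain T s e where Ts: "W = T * s" and copT: "coprime T ?q" and se: "s dvd ?q ^ e"
    using decomp_coprime[OF W0] by blast
  have T0: "T > 0" using Ts W0 by (cases T) auto
  obtain i1 \<delta> c where d0: "\<delta> > 0" and c2: "c \<ge> 2" and cdiv: "?q ^ i0 dvd c"
    and Tdvd: "T dvd D + (\<Sum>k<c. ?q ^ (M * ?q ^ (i1 + k * \<delta>)))"
    using num_choice[OF q2 T0 copT M0] by blast
  define ix where "ix k = i1 + k * \<delta>" for k
  define J where "J = ix (c - 1) + 1"
  have ixJ: "ix k + 1 \<le> J" if "k < c" for k
    using that d0 unfolding J_def ix_def by (simp add: mult_le_mono1)
  have ixmono: "ix k + 1 \<le> ix l" if "k < l" for k l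
  proof -
    have "k * \<delta> + \<delta> \<le> l * \<delta>" using that by (metis add.commute mult_Suc mult_le_mono1 Suc_leI)
    thus ?thesis using d0 unfolding ix_def by simp
  qed
  have Zprops: "degree (Z i) = ?q ^ (M * ?q ^ i)" "lead_coeff (Z i) = 1" for i
    unfolding Z_def using Z_props[of "M * ?q ^ i", where 'a='a] M0 q2 by simp_all
  have Znz: "Z i \<noteq> 0" for i using Zprops(2)[of i] by auto
  define Zp where "Zp = (\<Prod>k<c. Z (ix k))"
  define f0 where "f0 = P * Zp"
  have Zp0: "Zp \<noteq> 0" unfolding Zp_def using Znz by simp
  have lcf0: "lead_coeff f0 = 1" unfolding f0_def Zp_def
    by (simp only: lead_coeff_mult lead_coeff_prod P1 Zprops(2) prod.neutral_const mult_1)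
  have degf0: "degree f0 = D + (\<Sum>k<c. ?q ^ (M * ?q ^ (ix k)))"
    unfolding f0_def D_def Zp_def using P0 Znz
    by (simp add: degree_mult_eq degree_prod_sum_eq Zprops)
  have Tf0: "T dvd degree f0" unfolding degf0 ix_def using Tdvd .
  have f0g: "f0 mod g = h mod g"
  proof -
    have "g dvd Zp - (1 + n) ^ card {..<c}" unfolding Zp_def
      by (rule prod_cong_pow) (simp_all add: Zg)
    hence g1: "g dvd Zp - (1 + n) ^ c" by simp
    obtain m where cm: "c = ?q ^ i0 * m" using cdiv by (elim dvdE)
    have "g dvd ((1 + n) ^ (?q ^ i0)) ^ m - 1 ^ m" using pow_cong_dvd'[OF nil] .
    hence "g dvd (1 + n) ^ c - 1" unfolding cm by (simp add: power_mult)
    hence "g dvd (Zp - (1 + n) ^ c) + ((1 + n) ^ c - 1)" using g1 by (rule dvd_add[rotated])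
    hence "g dvd Zp - 1" by simp
    hence "g dvd P * (Zp - 1)" by (rule dvd_mult)
    hence "g dvd f0 - P" unfolding f0_def by (simp add: algebra_simps)
    hence "f0 mod g = P mod g" by (simp add: mod_eq_dvd_iff)
    thus ?thesis using P3 by simp
  qed
  have f0FF: "f0 dvd FF (M * ?q ^ J)"
  proof -
    have Zk: "Z (ix k) dvd FF (M * ?q ^ J)" if "k < c" for k
    proof -
      have "Z (ix k) dvd FF (M * ?q ^ ix k * ?q)" unfolding Z_def by (rule Z_dvd)
      moreover have "M * ?q ^ ix k * ?q dvd M * ?q ^ J"
      proof -
        have "?q ^ Suc (ix k) dvd ?q ^ J" by (rule le_imp_power_dvd) (use ixJ[OF that] in simp)
        hence "M * ?q ^ Suc (ix k) dvd M * ?q ^ J" by (rule mult_dvd_mono[OF dvd_refl])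
        thus ?thesis by (simp only: power_Suc2 mult.assoc)
      qed
      ultimately show ?thesis using FF_dvd dvd_trans by blast
    qed
    have Zcop: "coprime (Z (ix k)) (Z (ix l))" if "k < l" for k l
    proof -
      have "Z (ix k) dvd FF (M * ?q ^ ix k * ?q)" unfolding Z_def by (rule Z_dvd)
      moreover have "M * ?q ^ ix k * ?q dvd M * ?q ^ ix l"
      proof -
        have "?q ^ Suc (ix k) dvd ?q ^ ix l" by (rule le_imp_power_dvd) (use ixmono[OF that] in simp)
        hence "M * ?q ^ Suc (ix k) dvd M * ?q ^ ix l" by (rule mult_dvd_mono[OF dvd_refl])
        thus ?thesis by (simp only: power_Suc2 mult.assoc)
      qed
      ultimately have "Z (ix k) dvd FF (M * ?q ^ ix l)" using FF_dvd dvd_trans by blast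
      thus ?thesis unfolding Z_def[of "ix l"] by (rule coprime_FF1)
    qed
    have "Zp dvd FF (M * ?q ^ J)" unfolding Zp_def
    proof (rule prod_coprime_dvd)
      show "\<forall>i\<in>{..<c}. Z (ix i) dvd FF (M * ?q ^ J)" using Zk by simp
      show "\<forall>i\<in>{..<c}. \<forall>j\<in>{..<c}. i \<noteq> j \<longrightarrow> coprime (Z (ix i)) (Z (ix j))"
        using Zcop by (metis coprime_commute linorder_neqE_nat)
    qed simp
    moreover have "P dvd FF (M * ?q ^ J)"
      using PK FF_dvd[of K "M * ?q ^ J"] MK by (meson dvd_trans dvd_mult2)
    moreover have "coprime P Zp" unfolding Zp_def
    proof (rule coprime_prod_right)
      show "\<forall>i\<in>{..<c}. coprime P (Z (ix i))"
      proof
        fix i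
        have "P dvd FF (M * ?q ^ ix i)"
          using PK FF_dvd[of K "M * ?q ^ ix i"] MK by (meson dvd_trans dvd_mult2)
        thus "coprime P (Z (ix i))" unfolding Z_def by (rule coprime_FF1)
      qed
    qed simp
    ultimately show ?thesis unfolding f0_def by (blast intro: divides_mult)
  qed
  obtain m where cm: "c = Suc m" and m1: "m \<ge> 1" using c2 by (cases c) auto
  define R where "R = P * (\<Prod>i<m. Z (ix (Suc i)))"
  have f0R: "f0 = Z (ix 0) * R" unfolding f0_def R_def Zp_def cm prod.lessThan_Suc_shift
    by (simp add: ac_simps)
  have R0: "R \<noteq> 0" unfolding R_def using P0 Znz by simp
  have degZpos: "degree (Z i) > 0" for i unfolding Zprops using q2 by simp
  have degR: "degree R > 0"
  proof -
    have "degree R = D + (\<Sum>i<m. degree (Z (ix (Suc i))))"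
      unfolding R_def D_def using P0 Znz by (simp add: degree_mult_eq degree_prod_sum_eq)
    moreover have "degree (Z (ix (Suc 0))) \<le> (\<Sum>i<m. degree (Z (ix (Suc i))))"
      using m1 by (intro member_le_sum[of 0 "{..<m}" "\<lambda>i. degree (Z (ix (Suc i)))", simplified]) auto
    ultimately show ?thesis using degZpos[of "ix (Suc 0)"] by linarith
  qed
  have degf0pos: "degree f0 > 0" unfolding f0R using Znz R0 degZpos by (simp add: degree_mult_eq)
  define aa where "aa t = e + J + t" for t
  define EE where "EE t = M * ?q ^ aa t" for t
  define fam where "fam t = f0 \<circ>\<^sub>p Lf (EE t) XX" for t
  have EE0: "EE t > 0" for t unfolding EE_def using M0 q2 by simp
  have degfam: "degree (fam t) = degree f0 * ?q ^ (EE t * ?q)" for t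
    unfolding fam_def using L_props(1)[OF EE0, where 'a='a] by (simp add: degree_pcompose)
  have famS: "fam t \<in> ?S" for t
  proof -
    let ?E = "EE t"
    let ?L = "Lf ?E XX :: 'a poly"
    have dL: "degree ?L = ?q ^ (?E * ?q)" and lL: "lead_coeff ?L = 1"
      using L_props[OF EE0, where 'a='a] by simp_all
    have dL0: "degree ?L > 0" using dL q2 by simp
    have lc: "lead_coeff (fam t) = 1" unfolding fam_def using lead_coeff_comp[OF dL0, of f0] lcf0 lL by simp
    have Ei: "?E \<ge> i0"
    proof -
      have "1 \<le> ?q ^ aa t" using q2 by simp
      hence "M * 1 \<le> ?E" unfolding EE_def by (rule mult_le_mono2)
      thus ?thesis using Mi by simp
    qed
    have Ep: "p0 dvd ?E" unfolding EE_def using Mp by simp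
    have gL: "g dvd ?L - XX" by (rule L_cong[OF per Ei Ep])
    have "g dvd (f0 \<circ>\<^sub>p ?L) - (f0 \<circ>\<^sub>p XX)" by (rule dvd_pcompose_cong[OF gL])
    hence "g dvd fam t - f0" unfolding fam_def by simp
    hence "fam t mod g = f0 mod g" by (simp add: mod_eq_dvd_iff)
    hence modg: "fam t mod g = h mod g" using f0g by simp
    have dvFF: "fam t dvd FF (M * ?q ^ J * (?E * Suc ?q * ?q))"
      unfolding fam_def by (rule compose_FF[OF f0FF])
    have expd: "M * ?q ^ J * (?E * Suc ?q * ?q) dvd degree (fam t)"
    proof -
      have "M * ?q ^ J * (?E * Suc ?q * ?q) = (M * M * Suc ?q) * ?q ^ (J + aa t + 1)"
        unfolding EE_def by (simp add: power_add algebra_simps)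
      also have "\<dots> = T * (s * ?q ^ (J + aa t + 1))" unfolding W_def[symmetric] Ts by (simp only: mult.assoc)
      finally have e1: "M * ?q ^ J * (?E * Suc ?q * ?q) = T * (s * ?q ^ (J + aa t + 1))" .
      have "e + J + aa t + 1 \<le> ?E * ?q"
      proof -
        have "2 * (aa t + 1) \<le> 2 ^ (aa t + 1)" by (rule two_pow_ge) simp
        also have "\<dots> \<le> ?q ^ (aa t + 1)" using q2 by (rule power_mono) simp
        also have "?q ^ (aa t + 1) \<le> ?E * ?q" unfolding EE_def using M0
          by (simp add: power_Suc2 mult.assoc)
        finally show ?thesis unfolding aa_def by simp
      qed
      hence "?q ^ (e + J + aa t + 1) dvd ?q ^ (?E * ?q)" by (rule le_imp_power_dvd)
      moreover have "s * ?q ^ (J + aa t + 1) dvd ?q ^ (e + J + aa t + 1)"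
        using se by (simp add: power_add mult_dvd_mono ac_simps)
      ultimately have "s * ?q ^ (J + aa t + 1) dvd ?q ^ (?E * ?q)" by (rule dvd_trans[rotated])
      hence "T * (s * ?q ^ (J + aa t + 1)) dvd degree f0 * ?q ^ (?E * ?q)"
        using Tf0 by (simp add: mult_dvd_mono)
      thus ?thesis unfolding e1 degfam .
    qed
    have dvn: "fam t dvd FF (degree (fam t))" using dvFF FF_dvd[OF expd] by (rule dvd_trans)
    have dpos: "degree (fam t) > 0" unfolding degfam using degf0pos q2 by simp
    have fAB: "fam t = (Z (ix 0) \<circ>\<^sub>p ?L) * (R \<circ>\<^sub>p ?L)" unfolding fam_def f0R by (simp add: pcompose_mult)
    have A0: "degree (Z (ix 0) \<circ>\<^sub>p ?L) > 0" using degZpos dL0 by (simp add: degree_pcompose)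
    have B0: "degree (R \<circ>\<^sub>p ?L) > 0" using degR dL0 by (simp add: degree_pcompose)
    have "carmichael_poly (fam t)"
      by (rule carmichael_crit[OF refl dpos _ fAB A0 B0]) (use dvn in \<open>simp add: FF_def\<close>)
    thus ?thesis using lc modg by simp
  qed
  have inj: "inj fam"
  proof (rule injI)
    fix t t' assume "fam t = fam t'"
    hence "degree f0 * ?q ^ (EE t * ?q) = degree f0 * ?q ^ (EE t' * ?q)" using degfam by metis
    hence "?q ^ (EE t * ?q) = ?q ^ (EE t' * ?q)" using degf0pos by simp
    hence "EE t * ?q = EE t' * ?q" using q2 by (simp add: power_inject_exp)
    hence "?q ^ aa t = ?q ^ aa t'" unfolding EE_def using M0 q2 by simp
    hence "aa t = aa t'" using q2 by (simp add: power_inject_exp)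
    thus "t = t'" unfolding aa_def by simp
  qed
  show ?thesis
  proof
    assume "finite ?S"
    moreover have "range fam \<subseteq> ?S" using famS by auto
    ultimately have "finite (range fam)" by (rule finite_subset[rotated])
    hence "finite (UNIV :: nat set)" using inj by (rule finite_imageD)
    thus False by simp
  qed
qed

theorem corollary4p3:
  fixes g h :: "'a::{finite,field_gcd} poly"
  assumes "g \<noteq> 0"
    and "gcd g h = 1 \<or> squarefree (gcd g h)"
  shows "infinite {f :: 'a poly. lead_coeff f = 1 \<and> carmichael_poly f \<and> f mod g = h mod g}"
proof -
  have "squarefree (gcd g h)" using assms(2) by auto
  thus ?thesis by (rule main_thm[OF assms(1)])
qed

end
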